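(* For $\mathbf z,\mathbf w\in\mathbb C^m\setminus\{0\}$: $$\mathbf Q_2^{(\hbar)}(\mathbf z,\mathbf w)=\tfrac12\Big(e^{(z_1\overline{w_1}+z_2\overline{w_2})/\hbar}+e^{-(z_1\overline{w_1}+z_2\overline{w_2})/\hbar}\Big),$$ $$\mathbf Q_4^{(\hbar)}(\mathbf z,\mathbf w)=\frac{1}{2\pi}\int_0^{2\pi}\exp\Big(\tfrac1\hbar\,\mathbf z\cdot \mathrm T(g(\psi))\mathbf w\Big)d\psi,$$ $$\mathbf Q_8^{(\hbar)}(\mathbf z,\mathbf w)=\int_{\theta=0}^{\pi/2}\int_{\alpha=0}^{2\pi}\int_{\gamma=0}^{2\pi}\exp\Big(\tfrac1\hbar\,\mathbf z\cdot \mathrm T(g(\theta,\alpha,\gamma))\mathbf w\Big)\,dm(\theta,\alpha,\gamma),$$ where $g(\psi)=e^{i\psi}\in S^1$, $g(\theta,\alpha,\gamma)=\begin{pmatrix}\cos\theta\, e^{i\alpha}&\sin\theta\, e^{i\gamma}\\ -\sin\theta\, e^{-i\gamma}&\cos\theta\, e^{-i\alpha}\end{pmatrix}\in\mathrm{SU}(2)$, and $dm(\theta,\alpha,\gamma)=\frac{1}{2\pi^2}\sin\theta\cos\theta\,d\theta\,d\alpha\,d\gamma$.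
   Context: For $\mathbf z,\mathbf w\in\mathbb C^k$ write $\mathbf z\cdot\mathbf w=\sum_{s=1}^k z_s\overline{w_s}$; $\hbar>0$. The kernels are $\mathbf Q_2^{(\hbar)}(\mathbf z,\mathbf w)=\sum_{k\ge0}\frac{(z_1\overline{w_1}+z_2\overline{w_2})^{2k}}{(2k)!\hbar^{2k}}$, $\mathbf Q_4^{(\hbar)}(\mathbf z,\mathbf w)=\sum_{k\ge0}\frac{(z_1\overline{w_1}+z_2\overline{w_2})^{k}(z_3\overline{w_3}+z_4\overline{w_4})^{k}}{(k!)^2\hbar^{2k}}$, $\mathbf Q_8^{(\hbar)}(\mathbf z,\mathbf w)=\sum_{k\ge0}\frac{\varrho(\mathbf z,\mathbf w)^k}{k!(k+1)!\hbar^{2k}}$, with $\varrho(\mathbf u,\mathbf v)=[u_1\overline{v_1}+u_2\overline{v_2}+u_3\overline{v_3}+u_4\overline{v_4}][u_5\overline{v_5}+u_6\overline{v_6}+u_7\overline{v_7}+u_8\overline{v_8}]+[u_7\overline{v_1}-u_8\overline{v_2}+u_5\overline{v_3}-u_6\overline{v_4}][u_2\overline{v_8}-u_3\overline{v_5}+u_4\overline{v_6}-u_1\overline{v_7}]$. Group actions: for $g=e^{i\theta}\in S^1$, $\mathrm T(g)=\mathrm{diag}(e^{-i\theta},e^{-i\theta},e^{i\theta},e^{i\theta})$ on $\mathbb C^4$; for $g\in\mathrm{SU}(2)$, $\mathrm T(g)=\mathbf L^\dagger\mathbf V(g)\mathbf L$ on $\mathbb C^8$, where $\mathbf V(g)$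 is the block-diagonal $8\times8$ matrix with four diagonal $2\times2$ blocks equal to $g$, and $\mathbf L$ is the $8\times 8$ real matrix whose rows are, in order, $e_1,e_7,e_3,e_5,-e_4,e_6,-e_2,e_8$ ($e_j$ the standard basis row vectors). *)

theory Defs
  imports "HOL-Analysis.Analysis"
begin

text \<open>Vectors in C^m are represented as functions nat => complex, using the
  components with indices 1..m; square matrices as nat => nat => complex
  with indices 1..m.\<close>

definition cdot :: "nat \<Rightarrow> (nat \<Rightarrow> complex) \<Rightarrow> (nat \<Rightarrow> complex) \<Rightarrow> complex" where
  "cdot m z w = (\<Sum>s=1..m. z s * cnj (w s))"

definition nonzero_vec :: "nat \<Rightarrow> (nat \<Rightarrow> complex) \<Rightarrow> bool" where
  "nonzero_vec m z \<longleftrightarrow> (\<exists>s\<in>{1..m}. z s \<noteq> 0)"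

definition mat_vec :: "nat \<Rightarrow> (nat \<Rightarrow> nat \<Rightarrow> complex) \<Rightarrow> (nat \<Rightarrow> complex) \<Rightarrow> (nat \<Rightarrow> complex)" where
  "mat_vec m A w = (\<lambda>i. \<Sum>j=1..m. A i j * w j)"

definition mat_mul :: "nat \<Rightarrow> (nat \<Rightarrow> nat \<Rightarrow> complex) \<Rightarrow> (nat \<Rightarrow> nat \<Rightarrow> complex) \<Rightarrow> (nat \<Rightarrow> nat \<Rightarrow> complex)" where
  "mat_mul m A B = (\<lambda>i j. \<Sum>k=1..m. A i k * B k j)"

definition mat_adj :: "(nat \<Rightarrow> nat \<Rightarrow> complex) \<Rightarrow> (nat \<Rightarrow> nat \<Rightarrow> complex)" where
  "mat_adj A = (\<lambda>i j. cnj (A j i))"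

definition Q2 :: "real \<Rightarrow> (nat \<Rightarrow> complex) \<Rightarrow> (nat \<Rightarrow> complex) \<Rightarrow> complex" where
  "Q2 h z w = (\<Sum>k. (z 1 * cnj (w 1) + z 2 * cnj (w 2)) ^ (2*k)
                      / (of_nat (fact (2*k)) * of_real h ^ (2*k)))"

definition Q4 :: "real \<Rightarrow> (nat \<Rightarrow> complex) \<Rightarrow> (nat \<Rightarrow> complex) \<Rightarrow> complex" where
  "Q4 h z w = (\<Sum>k. (z 1 * cnj (w 1) + z 2 * cnj (w 2)) ^ k * (z 3 * cnj (w 3) + z 4 * cnj (w 4)) ^ k
                      / ((of_nat (fact k))\<^sup>2 * of_real h ^ (2*k)))"

definition rho :: "(nat \<Rightarrow> complex) \<Rightarrow> (nat \<Rightarrow> complex) \<Rightarrow> complex" where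
  "rho u v =
     (u 1 * cnj (v 1) + u 2 * cnj (v 2) + u 3 * cnj (v 3) + u 4 * cnj (v 4))
   * (u 5 * cnj (v 5) + u 6 * cnj (v 6) + u 7 * cnj (v 7) + u 8 * cnj (v 8))
   + (u 7 * cnj (v 1) - u 8 * cnj (v 2) + u 5 * cnj (v 3) - u 6 * cnj (v 4))
   * (u 2 * cnj (v 8) - u 3 * cnj (v 5) + u 4 * cnj (v 6) - u 1 * cnj (v 7))"

definition Q8 :: "real \<Rightarrow> (nat \<Rightarrow> complex) \<Rightarrow> (nat \<Rightarrow> complex) \<Rightarrow> complex" where
  "Q8 h z w = (\<Sum>k. rho z w ^ k / (of_nat (fact k * fact (k+1)) * of_real h ^ (2*k)))"

definition T4 :: "complex \<Rightarrow> (nat \<Rightarrow> nat \<Rightarrow> complex)" where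
  "T4 g = (\<lambda>i j. if i = j then (if i \<le> 2 then inverse g else g) else 0)"

text \<open>The SU(2) action on C^8: T(g) = L^dagger V(g) L.  g is a 2x2 matrix with
  indices 1,2.  The rows of L are e1, e7, e3, e5, -e4, e6, -e2, e8.\<close>

definition L8 :: "nat \<Rightarrow> nat \<Rightarrow> complex" where
  "L8 i j = (if i \<in> {1..8} \<and> j = [1,7,3,5,4,6,2,8::nat] ! (i-1)
             then [1,1,1,1,-1,1,-1,1::complex] ! (i-1) else 0)"

definition V8 :: "(nat \<Rightarrow> nat \<Rightarrow> complex) \<Rightarrow> nat \<Rightarrow> nat \<Rightarrow> complex" where
  "V8 g i j = (if i \<in> {1..8} \<and> j \<in> {1..8} \<and> (i+1) div 2 = (j+1) div 2
               then g (if odd i then 1 else 2) (if odd j then 1 else 2) else 0)"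

definition T8 :: "(nat \<Rightarrow> nat \<Rightarrow> complex) \<Rightarrow> nat \<Rightarrow> nat \<Rightarrow> complex" where
  "T8 g = mat_mul 8 (mat_adj L8) (mat_mul 8 (V8 g) L8)"

definition gSU2 :: "real \<Rightarrow> real \<Rightarrow> real \<Rightarrow> nat \<Rightarrow> nat \<Rightarrow> complex" where
  "gSU2 \<theta> \<alpha> \<gamma> = (\<lambda>i j.
     if i = 1 \<and> j = 1 then of_real (cos \<theta>) * cis \<alpha>
     else if i = 1 \<and> j = 2 then of_real (sin \<theta>) * cis \<gamma>
     else if i = 2 \<and> j = 1 then - of_real (sin \<theta>) * cis (- \<gamma>)
     else if i = 2 \<and> j = 2 then of_real (cos \<theta>) * cis (- \<alpha>)
     else 0)"

end

theory Submission
  imports Defs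
begin

lemma termwise_integral:
  fixes f :: "nat \<Rightarrow> real \<Rightarrow> complex"
  assumes ab: "a \<le> b" and c: "\<And>n. continuous_on {a..b} (f n)"
    and bd: "\<And>n t. t \<in> {a..b} \<Longrightarrow> norm (f n t) \<le> M n" and sM: "summable M"
  shows "(\<lambda>n. integral {a..b} (f n)) sums integral {a..b} (\<lambda>t. \<Sum>n. f n t)"
proof -
  have U: "uniform_limit {a..b} (\<lambda>N t. \<Sum>i<N. f i t) (\<lambda>t. \<Sum>n. f n t) sequentially"
    by (rule Weierstrass_m_test[OF bd sM])
  have cN: "\<And>N. continuous_on {a..b} (\<lambda>t. \<Sum>i<N. f i t)"
    using c by (intro continuous_intros) auto
  obtain I J where I: "\<And>N. ((\<lambda>t. \<Sum>i<N. f i t) has_integral I N) {a..b}"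
    and J: "((\<lambda>t. \<Sum>n. f n t) has_integral J) {a..b}" and L: "I \<longlonglongrightarrow> J"
    using uniform_limit_integral[OF U cN] by auto
  have "I = (\<lambda>N. \<Sum>i<N. integral {a..b} (f i))"
  proof (rule ext)
    fix N
    have "I N = integral {a..b} (\<lambda>t. \<Sum>i<N. f i t)" using I integral_unique by metis
    also have "\<dots> = (\<Sum>i<N. integral {a..b} (f i))"
      by (rule integral_sum) (auto intro: integrable_continuous_interval c)
    finally show "I N = (\<Sum>i<N. integral {a..b} (f i))" .
  qed
  moreover have "J = integral {a..b} (\<lambda>t. \<Sum>n. f n t)" using J integral_unique by metis
  ultimately show ?thesis using L unfolding sums_def by simp
qed

lemma integral_cis_int:
  fixes k :: int
  shows "integral {0..2*pi} (\<lambda>t. cis (of_int k * t)) = (if k = 0 then of_real (2 * pi) else 0)"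
proof (cases "k = 0")
  case True then show ?thesis by (simp add: scaleR_conv_of_real)
next
  case False
  have "((\<lambda>t. cis (of_int k * t)) has_integral
          (cis (of_int k * (2*pi)) / (\<i> * of_int k) - cis (of_int k * 0) / (\<i> * of_int k))) {0..2*pi}"
  proof (rule fundamental_theorem_of_calculus)
    fix x :: real
    show "((\<lambda>t. cis (of_int k * t) / (\<i> * of_int k)) has_vector_derivative cis (of_int k * x))
           (at x within {0..2*pi})"
      unfolding has_vector_derivative_def
      using False
      by (auto intro!: derivative_eq_intros simp: field_simps scaleR_conv_of_real)
  qed simp
  moreover have "cis (of_int k * (2*pi)) = 1"
    by (metis cis_multiple_2pi Ints_of_int mult.commute)
  ultimately show ?thesis using False by (simp add: integral_unique)
qed

lemma cis_pow_combine:
  fixes t :: real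
  assumes that: "k \<le> n"
  shows "cis (-t) ^ k * cis t ^ (n - k) = cis (of_int (int n - 2 * int k) * t)"
proof -
  have "cis (-t) ^ k * cis t ^ (n - k) = cis (real k * (-t)) * cis (real (n-k) * t)"
    by (simp only: Complex.DeMoivre)
  also have "\<dots> = cis (real k * (-t) + real (n-k) * t)" by (simp add: cis_mult)
  also have "real k * (-t) + real (n-k) * t = of_int (int n - 2 * int k) * t"
    using that by (simp add: of_nat_diff algebra_simps)
  finally show ?thesis .
qed

lemma sum_delta_half:
  "(\<Sum>k\<le>(n::nat). if n = 2 * k then g k else 0) = (if even n then g (n div 2) else (0::'a::comm_monoid_add))"
proof -
  have "(\<Sum>k\<le>n. if n = 2 * k then g k else 0) = (\<Sum>k\<le>n. if k = n div 2 then (if even n then g k else 0) else 0)"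
    by (rule sum.cong) auto
  also have "\<dots> = (if even n then g (n div 2) else 0)"
    by (subst sum.delta) auto
  finally show ?thesis .
qed

lemma circle_power:
  fixes x y :: complex
  shows "integral {0..2*pi} (\<lambda>t. (x * cis (-t) + y * cis t)^n)
     = (if even n then of_real (2*pi) * of_nat (n choose (n div 2)) * (x*y)^(n div 2) else 0)"
proof -
  have e: "(x * cis (-t) + y * cis t)^n = (\<Sum>k\<le>n. (of_nat (n choose k) * x^k * y^(n-k)) * cis (of_int (int n - 2 * int k) * t))" for t
  proof -
    have "(x * cis (-t) + y * cis t)^n = (\<Sum>k\<le>n. of_nat (n choose k) * (x * cis (-t))^k * (y * cis t)^(n-k))"
      by (simp add: binomial_ring)
    also have "\<dots> = (\<Sum>k\<le>n. (of_nat (n choose k) * x^k * y^(n-k)) * (cis (-t) ^ k * cis t ^ (n - k)))"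
      by (rule sum.cong) (auto simp: power_mult_distrib)
    also have "\<dots> = (\<Sum>k\<le>n. (of_nat (n choose k) * x^k * y^(n-k)) * cis (of_int (int n - 2 * int k) * t))"
      by (rule sum.cong) (auto simp: cis_pow_combine)
    finally show ?thesis .
  qed
  have "integral {0..2*pi} (\<lambda>t. (x * cis (-t) + y * cis t)^n)
     = (\<Sum>k\<le>n. integral {0..2*pi} (\<lambda>t. (of_nat (n choose k) * x^k * y^(n-k)) * cis (of_int (int n - 2 * int k) * t)))"
    unfolding e by (rule integral_sum) (auto intro!: integrable_continuous_interval continuous_intros)
  also have "\<dots> = (\<Sum>k\<le>n. (of_nat (n choose k) * x^k * y^(n-k)) * (if n = 2 * k then of_real (2*pi) else 0))"
  proof (rule sum.cong)
    fix k assume "k \<in> {..n}"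
    define m where "m = int n - 2 * int k"
    have mm: "(m = 0) = (n = 2 * k)" unfolding m_def by auto
    have I: "integral {0..2*pi} (\<lambda>t. cis (of_int m * t)) = (if n = 2 * k then of_real (2 * pi) else 0)"
      using integral_cis_int[of m] unfolding mm .
    show "integral {0..2*pi} (\<lambda>t. (of_nat (n choose k) * x^k * y^(n-k)) * cis (of_int (int n - 2 * int k) * t))
      = (of_nat (n choose k) * x^k * y^(n-k)) * (if n = 2 * k then of_real (2*pi) else 0)"
      unfolding m_def[symmetric] Henstock_Kurzweil_Integration.integral_mult_right I ..
  qed simp
  also have "\<dots> = (\<Sum>k\<le>n. if n = 2 * k then of_real (2*pi) * of_nat (n choose k) * (x*y)^k else 0)"
  proof (rule sum.cong)
    fix k assume "k \<in> {..n}"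
    show "(of_nat (n choose k) * x^k * y^(n-k)) * (if n = 2 * k then of_real (2*pi) else 0)
       = (if n = 2 * k then of_real (2*pi) * of_nat (n choose k) * (x*y)^k else 0)"
    proof (cases "n = 2 * k")
      case True
      then have "n - k = k" by simp
      then show ?thesis using True by (simp add: power_mult_distrib mult_ac)
    qed simp
  qed simp
  also have "\<dots> = (if even n then of_real (2*pi) * of_nat (n choose (n div 2)) * (x*y)^(n div 2) else 0)"
    by (rule sum_delta_half)
  finally show ?thesis .
qed

lemma exp_bound_summable: "summable (\<lambda>n. (r::real)^n / fact n)"
  using exp_converges[of r] by (simp add: sums_summable divide_inverse mult.commute)

lemma exp_sums_div: "(\<lambda>n. u^n / fact n) sums exp (u::complex)"
  using exp_converges[of u] by (simp add: scaleR_conv_of_real divide_inverse mult.commute)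

lemma even_reindex_sums:
  assumes "\<And>n. odd n \<Longrightarrow> F n = 0"
  shows "(\<lambda>k. F (2*k)) sums c \<longleftrightarrow> F sums c"
proof (rule sums_mono_reindex)
  show "strict_mono (\<lambda>k::nat. 2*k)" by (auto simp: strict_mono_def)
  fix n assume "n \<notin> range (\<lambda>k::nat. 2*k)"
  then have "odd n" by (metis evenE rangeI)
  then show "F n = 0" using assms by blast
qed

lemma circle_exp:
  fixes x y :: complex
  shows "(\<lambda>k. of_real (2*pi) * ((x*y)^k / (fact k)^2)) sums integral {0..2*pi} (\<lambda>t. exp (x * cis (-t) + y * cis t))"
proof -
  define f where "f n t = (x * cis (-t) + y * cis t)^n / fact n" for n t
  have S: "(\<lambda>n. integral {0..2*pi} (f n)) sums integral {0..2*pi} (\<lambda>t. \<Sum>n. f n t)"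
  proof (rule termwise_integral)
    fix n t
    have "norm (x * cis (-t) + y * cis t) \<le> norm x + norm y"
      by (rule order_trans[OF norm_triangle_ineq]) (simp add: norm_mult)
    then have "norm (x * cis (-t) + y * cis t) ^ n \<le> (norm x + norm y) ^ n"
      by (rule power_mono) simp
    then show "norm (f n t) \<le> (norm x + norm y)^n / fact n"
      unfolding f_def by (simp add: norm_divide norm_power divide_right_mono)
  qed (auto simp: f_def intro!: continuous_intros exp_bound_summable)
  have E: "(\<lambda>t. \<Sum>n. f n t) = (\<lambda>t. exp (x * cis (-t) + y * cis t))"
    unfolding f_def using exp_sums_div sums_unique by (metis)
  have I: "integral {0..2*pi} (f n) = (if even n then of_real (2*pi) * of_nat (n choose (n div 2)) * (x*y)^(n div 2) else 0) / fact n" for n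
    unfolding f_def by (simp only: integral_divide circle_power)
  have "(\<lambda>k. integral {0..2*pi} (f (2*k))) = (\<lambda>k. of_real (2*pi) * ((x*y)^k / (fact k)^2))"
  proof (rule ext)
    fix k
    have b: "fact k * fact k * ((2*k) choose k) = (fact (2*k) :: nat)"
      using binomial_fact_lemma[of k "2*k"] by (simp add: mult_2)
    have b': "(fact k)^2 * (of_nat ((2*k) choose k) :: complex) = fact (2*k)"
    proof -
      have "(of_nat (fact k * fact k * ((2*k) choose k)) :: complex) = of_nat (fact (2*k))" using b by simp
      then show ?thesis by (simp add: power2_eq_square mult_ac)
    qed
    have nz: "(fact k :: complex) \<noteq> 0" by simp
    show "integral {0..2*pi} (f (2*k)) = of_real (2*pi) * ((x*y)^k / (fact k)^2)"
      unfolding I using b' nz by (simp add: field_simps)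
  qed
  then show ?thesis using S unfolding E
    by (subst (asm) even_reindex_sums[symmetric]) (auto simp: I)
qed

lemma set12: "{1..2::nat} = {1,2}" by auto
lemma set14: "{1..4::nat} = {1,2,3,4}" by auto
lemma set18: "{1..8::nat} = {1,2,3,4,5,6,7,8}" by auto

lemma cdot2: "cdot 2 z w = z 1 * cnj (w 1) + z 2 * cnj (w 2)"
  unfolding cdot_def set12 by simp

lemma part1: "Q2 h z w = (exp (cdot 2 z w / of_real h) + exp (- cdot 2 z w / of_real h)) / 2"
proof -
  define a where "a = z 1 * cnj (w 1) + z 2 * cnj (w 2)"
  define u where "u = a / of_real h"
  have "(\<lambda>n. if even n then u ^ n /\<^sub>R fact n else 0) sums cosh u" by (rule cosh_converges)
  then have "(\<lambda>k. u ^ (2*k) /\<^sub>R fact (2*k)) sums cosh u"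
    by (subst (asm) even_reindex_sums[symmetric]) auto
  moreover have "(\<lambda>k. u ^ (2*k) /\<^sub>R fact (2*k)) = (\<lambda>k. a ^ (2*k) / (of_nat (fact (2*k)) * of_real h ^ (2*k)))"
    by (rule ext) (simp add: u_def power_divide scaleR_conv_of_real divide_inverse power_mult_distrib power_inverse mult_ac)
  ultimately have "Q2 h z w = cosh u" unfolding Q2_def a_def[symmetric] by (simp add: sums_iff)
  also have "cosh u = (exp u + exp (- u)) / 2" unfolding cosh_def by (simp add: scaleR_conv_of_real)
  finally show ?thesis unfolding cdot2 a_def[symmetric] u_def by simp
qed

lemma cdot4T: "cdot 4 z (mat_vec 4 (T4 (cis t)) w) = (z 3 * cnj (w 3) + z 4 * cnj (w 4)) * cis (-t) + (z 1 * cnj (w 1) + z 2 * cnj (w 2)) * cis t"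
  unfolding cdot_def mat_vec_def set14 by (simp add: T4_def cis_cnj algebra_simps)

lemma part2: "Q4 h z w = of_real (1 / (2 * pi)) *
              integral {0..2*pi} (\<lambda>\<psi>. exp (cdot 4 z (mat_vec 4 (T4 (cis \<psi>)) w) / of_real h))"
proof -
  define A where "A = z 1 * cnj (w 1) + z 2 * cnj (w 2)"
  define B where "B = z 3 * cnj (w 3) + z 4 * cnj (w 4)"
  define x where "x = B / of_real h"
  define y where "y = A / of_real h"
  have c4: "cdot 4 z (mat_vec 4 (T4 (cis t)) w) = B * cis (-t) + A * cis t" for t
    unfolding A_def B_def by (rule cdot4T)
  have e: "(\<lambda>\<psi>. exp (cdot 4 z (mat_vec 4 (T4 (cis \<psi>)) w) / of_real h)) = (\<lambda>t. exp (x * cis (-t) + y * cis t))"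
    by (rule ext) (simp add: c4 x_def y_def add_divide_distrib)
  have "(\<lambda>k. of_real (1 / (2*pi)) * (of_real (2*pi) * ((x*y)^k / (fact k)^2))) sums (of_real (1 / (2*pi)) * integral {0..2*pi} (\<lambda>t. exp (x * cis (-t) + y * cis t)))"
    by (rule sums_mult[OF circle_exp])
  moreover have "(\<lambda>k. of_real (1 / (2*pi)) * (of_real (2*pi) * ((x*y)^k / (fact k)^2))) =
     (\<lambda>k. (z 1 * cnj (w 1) + z 2 * cnj (w 2)) ^ k * (z 3 * cnj (w 3) + z 4 * cnj (w 4)) ^ k
                      / ((of_nat (fact k))\<^sup>2 * of_real h ^ (2*k)))"
    unfolding A_def[symmetric] B_def[symmetric]
  proof (rule ext)
    fix k
    have 1: "of_real (1/(2*pi)) * of_real (2*pi) = (1::complex)"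
      by (simp flip: of_real_mult)
    have 2: "(x*y)^k = A^k * B^k / of_real h ^ (2*k)"
      unfolding x_def y_def mult_2 power_add by (simp add: power_mult_distrib power_divide mult_ac)
    show "of_real (1 / (2*pi)) * (of_real (2*pi) * ((x*y)^k / (fact k)^2)) = A ^ k * B ^ k / ((of_nat (fact k))\<^sup>2 * of_real h ^ (2*k))"
      unfolding 2 mult.assoc[symmetric] 1 by simp
  qed
  ultimately show ?thesis unfolding Q4_def e by (simp add: sums_iff)
qed

lemma mv_mul: "mat_vec m (mat_mul m A B) w = mat_vec m A (mat_vec m B w)"
  unfolding mat_vec_def mat_mul_def
  by (rule ext) (simp add: sum_distrib_left sum_distrib_right mult.assoc, rule sum.swap)

lemma cdot_adj: "cdot m z (mat_vec m (mat_adj A) v) = cdot m (mat_vec m A z) v"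
  unfolding cdot_def mat_vec_def mat_adj_def
  by (simp add: sum_distrib_left sum_distrib_right, subst sum.swap, simp add: mult_ac)

lemma L8z: "mat_vec 8 L8 z (Suc 0) = z 1 \<and> mat_vec 8 L8 z 2 = z 7 \<and> mat_vec 8 L8 z 3 = z 3 \<and> mat_vec 8 L8 z 4 = z 5
  \<and> mat_vec 8 L8 z 5 = - z 4 \<and> mat_vec 8 L8 z 6 = z 6 \<and> mat_vec 8 L8 z 7 = - z 2 \<and> mat_vec 8 L8 z 8 = z 8"
  unfolding mat_vec_def set18 by (simp add: L8_def)

lemma V8v: "mat_vec 8 (V8 g) v (Suc 0) = g 1 1 * v 1 + g 1 2 * v 2 \<and> mat_vec 8 (V8 g) v 2 = g 2 1 * v 1 + g 2 2 * v 2
  \<and> mat_vec 8 (V8 g) v 3 = g 1 1 * v 3 + g 1 2 * v 4 \<and> mat_vec 8 (V8 g) v 4 = g 2 1 * v 3 + g 2 2 * v 4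
  \<and> mat_vec 8 (V8 g) v 5 = g 1 1 * v 5 + g 1 2 * v 6 \<and> mat_vec 8 (V8 g) v 6 = g 2 1 * v 5 + g 2 2 * v 6
  \<and> mat_vec 8 (V8 g) v 7 = g 1 1 * v 7 + g 1 2 * v 8 \<and> mat_vec 8 (V8 g) v 8 = g 2 1 * v 7 + g 2 2 * v 8"
  unfolding mat_vec_def set18 by (simp add: V8_def)

definition "M11 z w = z 1 * cnj (w 1) + z 2 * cnj (w 2) + z 3 * cnj (w 3) + z 4 * cnj (w 4)"
definition "M22 z w = z 5 * cnj (w 5) + z 6 * cnj (w 6) + z 7 * cnj (w 7) + z 8 * cnj (w 8)"
definition "M12 z w = z 1 * cnj (w 7) + z 3 * cnj (w 5) - z 4 * cnj (w 6) - z 2 * cnj (w 8)"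
definition "M21 z w = z 7 * cnj (w 1) + z 5 * cnj (w 3) - z 6 * cnj (w 4) - z 8 * cnj (w 2)"

lemma cdot8T: "cdot 8 z (mat_vec 8 (T8 g) w) =
   cnj (g 1 1) * M11 z w + cnj (g 1 2) * M12 z w + cnj (g 2 1) * M21 z w + cnj (g 2 2) * M22 z w"
proof -
  have "cdot 8 z (mat_vec 8 (T8 g) w) = cdot 8 (mat_vec 8 L8 z) (mat_vec 8 (V8 g) (mat_vec 8 L8 w))"
    unfolding T8_def mv_mul cdot_adj ..
  also have "\<dots> = cnj (g 1 1) * M11 z w + cnj (g 1 2) * M12 z w + cnj (g 2 1) * M21 z w + cnj (g 2 2) * M22 z w"
    unfolding cdot_def set18 by (simp add: L8z V8v M11_def M12_def M21_def M22_def algebra_simps)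
  finally show ?thesis .
qed

lemma rho_eq: "rho z w = M11 z w * M22 z w - M12 z w * M21 z w"
  unfolding rho_def M11_def M12_def M21_def M22_def by (simp add: algebra_simps)

definition Jr :: "nat \<Rightarrow> nat \<Rightarrow> real" where
  "Jr p q = integral {0..pi/2} (\<lambda>\<theta>. cos \<theta>^(2*p+1) * sin \<theta>^(2*q+1))"

lemma Jr_int: "(\<lambda>\<theta>. cos \<theta>^(2*p+1) * sin \<theta>^(2*q+1)) integrable_on {0..pi/2}"
  by (intro integrable_continuous_interval continuous_intros)

lemma D_cos_pow: "((\<lambda>\<theta>. cos \<theta> ^ Suc m) has_real_derivative (real (Suc m) * cos x ^ m * (- sin x))) (at x within S)"
  by (rule DERIV_cong[OF DERIV_power[OF has_field_derivative_at_within[OF DERIV_cos]]]) simp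

lemma D_sin_pow: "((\<lambda>\<theta>. sin \<theta> ^ Suc m) has_real_derivative (real (Suc m) * sin x ^ m * cos x)) (at x within S)"
  by (rule DERIV_cong[OF DERIV_power[OF has_field_derivative_at_within[OF DERIV_sin]]]) simp

lemma D_gen: "((\<lambda>\<theta>. cos \<theta> ^ Suc m * sin \<theta> ^ Suc n) has_real_derivative
   (real (Suc n) * (cos x ^ Suc (Suc m) * sin x ^ n) - real (Suc m) * (cos x ^ m * sin x ^ Suc (Suc n)))) (at x within S)"
proof -
  have "((\<lambda>\<theta>. cos \<theta> ^ Suc m * sin \<theta> ^ Suc n) has_real_derivative
     (real (Suc m) * cos x ^ m * (- sin x)) * sin x ^ Suc n + real (Suc n) * sin x ^ n * cos x * cos x ^ Suc m) (at x within S)"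
    by (rule DERIV_mult[OF D_cos_pow D_sin_pow])
  moreover have "(real (Suc m) * cos x ^ m * (- sin x)) * sin x ^ Suc n + real (Suc n) * sin x ^ n * cos x * cos x ^ Suc m
     = real (Suc n) * (cos x ^ Suc (Suc m) * sin x ^ n) - real (Suc m) * (cos x ^ m * sin x ^ Suc (Suc n))"
    by (simp add: algebra_simps)
  ultimately show ?thesis by (rule DERIV_cong)
qed

lemma int_base_gen: "integral {0..pi/2} (\<lambda>\<theta>. cos \<theta>^m * sin \<theta>) = 1 / (real m + 1)"
proof -
  have "((\<lambda>\<theta>. cos \<theta>^m * sin \<theta>) has_integral
      ((- ((cos (pi/2))^(Suc m)) / real (Suc m)) - (- ((cos 0)^(Suc m)) / real (Suc m)))) {0..pi/2}"
  proof (rule fundamental_theorem_of_calculus)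
    fix x :: real
    have "((\<lambda>\<theta>. - (cos \<theta>^Suc m) / real (Suc m)) has_real_derivative - (real (Suc m) * cos x ^ m * (- sin x)) / real (Suc m)) (at x within {0..pi/2})"
      by (intro DERIV_cdivide DERIV_minus D_cos_pow)
    then show "((\<lambda>\<theta>. - (cos \<theta>^Suc m) / real (Suc m)) has_vector_derivative cos x^m * sin x)
          (at x within {0..pi/2})"
      unfolding has_real_derivative_iff_has_vector_derivative[symmetric]
      by (simp del: of_nat_Suc)
  qed simp
  then show ?thesis by (simp add: integral_unique)
qed

lemma aux_ring: "(x::real) * a * y + x * (y * b) = x * y * (a + b)"
  by (simp add: algebra_simps)

lemma int_split_gen: "integral {0..pi/2} (\<lambda>\<theta>. cos \<theta>^m * sin \<theta>^n) =
   integral {0..pi/2} (\<lambda>\<theta>. cos \<theta>^Suc (Suc m) * sin \<theta>^n) + integral {0..pi/2} (\<lambda>\<theta>. cos \<theta>^m * sin \<theta>^Suc (Suc n))"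
proof -
  have e: "cos \<theta>^m * sin \<theta>^n = cos \<theta>^Suc (Suc m) * sin \<theta>^n + cos \<theta>^m * sin \<theta>^Suc (Suc n)" for \<theta> :: real
  proof -
    have c: "cos \<theta>^Suc (Suc m) = cos \<theta>^m * (cos \<theta>)^2" by (metis power_add add_2_eq_Suc')
    have s: "sin \<theta>^Suc (Suc n) = sin \<theta>^n * (sin \<theta>)^2" by (metis power_add add_2_eq_Suc')
    have "cos \<theta>^Suc (Suc m) * sin \<theta>^n + cos \<theta>^m * sin \<theta>^Suc (Suc n)
       = cos \<theta>^m * sin \<theta>^n * ((cos \<theta>)^2 + (sin \<theta>)^2)"
      unfolding c s by (rule aux_ring)
    then show ?thesis by simp
  qed
  show ?thesis unfolding e
    by (rule integral_add) (auto intro!: integrable_continuous_interval continuous_intros)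
qed

lemma int_parts_gen: "real (Suc n) * integral {0..pi/2} (\<lambda>\<theta>. cos \<theta>^Suc (Suc m) * sin \<theta>^n) =
   real (Suc m) * integral {0..pi/2} (\<lambda>\<theta>. cos \<theta>^m * sin \<theta>^Suc (Suc n))"
proof -
  have "((\<lambda>\<theta>. real (Suc n) * (cos \<theta> ^ Suc (Suc m) * sin \<theta> ^ n) - real (Suc m) * (cos \<theta> ^ m * sin \<theta> ^ Suc (Suc n))) has_integral
      (cos (pi/2)^Suc m * sin (pi/2)^Suc n - cos 0^Suc m * sin 0^Suc n)) {0..pi/2}"
  proof (rule fundamental_theorem_of_calculus)
    fix x :: real
    show "((\<lambda>\<theta>. cos \<theta> ^ Suc m * sin \<theta> ^ Suc n) has_vector_derivative
       real (Suc n) * (cos x ^ Suc (Suc m) * sin x ^ n) - real (Suc m) * (cos x ^ m * sin x ^ Suc (Suc n)))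
          (at x within {0..pi/2})"
      unfolding has_real_derivative_iff_has_vector_derivative[symmetric] by (rule D_gen)
  qed simp
  then have "integral {0..pi/2} (\<lambda>\<theta>. real (Suc n) * (cos \<theta> ^ Suc (Suc m) * sin \<theta> ^ n) - real (Suc m) * (cos \<theta> ^ m * sin \<theta> ^ Suc (Suc n))) = 0"
    by (simp add: integral_unique)
  moreover have "integral {0..pi/2} (\<lambda>\<theta>. real (Suc n) * (cos \<theta> ^ Suc (Suc m) * sin \<theta> ^ n) - real (Suc m) * (cos \<theta> ^ m * sin \<theta> ^ Suc (Suc n)))
      = real (Suc n) * integral {0..pi/2} (\<lambda>\<theta>. cos \<theta>^Suc (Suc m) * sin \<theta>^n) - real (Suc m) * integral {0..pi/2} (\<lambda>\<theta>. cos \<theta>^m * sin \<theta>^Suc (Suc n))"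
    by (subst integral_diff) (auto intro!: integrable_continuous_interval continuous_intros)
  ultimately show ?thesis by simp
qed

lemma Jr_base: "Jr p 0 = 1 / (2 * real p + 2)"
  unfolding Jr_def using int_base_gen[of "2*p+1"] by simp

lemma sucsuc: "Suc (Suc (2*p+1)) = 2 * Suc p + 1" by simp

lemma Jr_split: "Jr p q = Jr (Suc p) q + Jr p (Suc q)"
  unfolding Jr_def using int_split_gen[of "2*p+1" "2*q+1"] unfolding sucsuc .

lemma Jr_parts: "(real p + 1) * Jr p (Suc q) = (real q + 1) * Jr (Suc p) q"
proof -
  have "real (Suc (2*q+1)) * Jr (Suc p) q = real (Suc (2*p+1)) * Jr p (Suc q)"
    unfolding Jr_def using int_parts_gen[of "2*q+1" "2*p+1"] unfolding sucsuc .
  then show ?thesis by (simp add: algebra_simps)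
qed
lemma Jr_formula: "Jr p q = fact p * fact q / (2 * fact (p+q+1))"
proof (induction q)
  case 0
  have f: "(fact (p + 0 + 1) :: real) = (real p + 1) * fact p" by simp
  have "(fact p::real) * 2 + fact p * (real p * 2) > 0" by (intro add_pos_nonneg) auto
  then show ?case unfolding Jr_base f by (simp add: field_simps)
next
  case (Suc q)
  have 1: "Jr p q = Jr (Suc p) q + Jr p (Suc q)" by (rule Jr_split)
  have 2: "(real p + 1) * Jr p (Suc q) = (real q + 1) * Jr (Suc p) q" by (rule Jr_parts)
  have "Jr p (Suc q) * (real p + real q + 2) = (real q + 1) * Jr p q"
    using 1 2 by (simp add: algebra_simps)
  then have "Jr p (Suc q) = (real q + 1) * Jr p q / (real p + real q + 2)"
    by (simp add: field_simps)
  also have "\<dots> = fact p * fact (Suc q) / (2 * fact (p + Suc q + 1))"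
    unfolding Suc.IH by (simp add: field_simps)
  finally show ?case .
qed

definition Xf :: "complex \<Rightarrow> complex \<Rightarrow> real \<Rightarrow> complex" where
  "Xf a d t = a * cis (-t) + d * cis t"
definition Wf :: "real \<Rightarrow> complex" where
  "Wf \<theta> = of_real (sin \<theta> * cos \<theta> / (2*pi^2))"
definition Tf :: "nat \<Rightarrow> nat \<Rightarrow> real \<Rightarrow> real" where
  "Tf j m \<theta> = cos \<theta>^j * sin \<theta>^m * (sin \<theta> * cos \<theta> / (2*pi^2))"
definition Kc :: "complex \<Rightarrow> complex \<Rightarrow> nat \<Rightarrow> complex" where
  "Kc a d j = (if even j then of_real (2*pi) * of_nat (j choose (j div 2)) * (a*d)^(j div 2) else 0)"
definition Ff where
  "Ff a d b e n \<theta> \<alpha> \<gamma> = (of_real (cos \<theta>) * Xf a d \<alpha> + of_real (sin \<theta>) * Xf b e \<gamma>)^n / fact n * Wf \<theta>"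
definition Gf where
  "Gf a d b e n \<theta> \<alpha> = (\<Sum>j\<le>n. (of_nat (n choose j) / fact n) * of_real (Tf j (n-j) \<theta>) * Xf a d \<alpha>^j * Kc b e (n-j))"
definition Hf where
  "Hf a d b e n \<theta> = (\<Sum>j\<le>n. (of_nat (n choose j) / fact n) * of_real (Tf j (n-j) \<theta>) * Kc a d j * Kc b e (n-j))"
definition Tn where
  "Tn a d b e n = (\<Sum>j\<le>n. (of_nat (n choose j) / fact n) * of_real (integral {0..pi/2} (Tf j (n-j))) * Kc a d j * Kc b e (n-j))"

lemma KX: "integral {0..2*pi} (\<lambda>t. Xf a d t ^ j) = Kc a d j"
  unfolding Xf_def Kc_def by (rule circle_power)

lemma cont_Xf [continuous_intros]: "continuous_on S (\<lambda>t. Xf a d t)"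
  unfolding Xf_def by (intro continuous_intros)

lemma cont_Tf [continuous_intros]: "continuous_on S (Tf j m)"
  unfolding Tf_def by (intro continuous_intros) auto

lemma Ff_expand: "Ff a d b e n \<theta> \<alpha> \<gamma> =
   (\<Sum>j\<le>n. ((of_nat (n choose j) / fact n) * of_real (Tf j (n-j) \<theta>) * Xf a d \<alpha>^j) * Xf b e \<gamma>^(n-j))"
proof -
  have "Ff a d b e n \<theta> \<alpha> \<gamma> = (\<Sum>j\<le>n. of_nat (n choose j) * (of_real (cos \<theta>) * Xf a d \<alpha>)^j * (of_real (sin \<theta>) * Xf b e \<gamma>)^(n-j)) / fact n * Wf \<theta>"
    unfolding Ff_def by (simp add: binomial_ring)
  also have "\<dots> = (\<Sum>j\<le>n. of_nat (n choose j) * (of_real (cos \<theta>) * Xf a d \<alpha>)^j * (of_real (sin \<theta>) * Xf b e \<gamma>)^(n-j) / fact n * Wf \<theta>)"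
    by (simp add: sum_divide_distrib sum_distrib_right)
  also have "\<dots> = (\<Sum>j\<le>n. ((of_nat (n choose j) / fact n) * of_real (Tf j (n-j) \<theta>) * Xf a d \<alpha>^j) * Xf b e \<gamma>^(n-j))"
    by (rule sum.cong) (simp_all add: Tf_def Wf_def power_mult_distrib mult_ac)
  finally show ?thesis .
qed

lemma int_gamma: "integral {0..2*pi} (Ff a d b e n \<theta> \<alpha>) = Gf a d b e n \<theta> \<alpha>"
proof -
  have "integral {0..2*pi} (Ff a d b e n \<theta> \<alpha>) = integral {0..2*pi} (\<lambda>\<gamma>. \<Sum>j\<le>n. ((of_nat (n choose j) / fact n) * of_real (Tf j (n-j) \<theta>) * Xf a d \<alpha>^j) * Xf b e \<gamma>^(n-j))"
    by (rule arg_cong[where f="integral _"], rule ext, rule Ff_expand)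
  also have "\<dots> = (\<Sum>j\<le>n. integral {0..2*pi} (\<lambda>\<gamma>. ((of_nat (n choose j) / fact n) * of_real (Tf j (n-j) \<theta>) * Xf a d \<alpha>^j) * Xf b e \<gamma>^(n-j)))"
    by (rule integral_sum) (auto intro!: integrable_continuous_interval continuous_intros)
  also have "\<dots> = Gf a d b e n \<theta> \<alpha>"
    unfolding Gf_def by (simp only: Henstock_Kurzweil_Integration.integral_mult_right KX)
  finally show ?thesis .
qed

lemma int_alpha: "integral {0..2*pi} (Gf a d b e n \<theta>) = Hf a d b e n \<theta>"
proof -
  have "integral {0..2*pi} (Gf a d b e n \<theta>) = (\<Sum>j\<le>n. integral {0..2*pi} (\<lambda>\<alpha>. (of_nat (n choose j) / fact n) * of_real (Tf j (n-j) \<theta>) * Xf a d \<alpha>^j * Kc b e (n-j)))"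
    unfolding Gf_def by (rule integral_sum) (auto intro!: integrable_continuous_interval continuous_intros)
  also have "\<dots> = Hf a d b e n \<theta>"
    unfolding Hf_def by (simp only: Henstock_Kurzweil_Integration.integral_mult_right Henstock_Kurzweil_Integration.integral_mult_left KX)
  finally show ?thesis .
qed

lemma integral_of_real_cont:
  fixes f :: "real \<Rightarrow> real"
  assumes "continuous_on {a..b} f"
  shows "integral {a..b} (\<lambda>x. (of_real (f x) :: complex)) = of_real (integral {a..b} f)"
  using has_integral_of_real[OF integrable_integral[OF integrable_continuous_interval[OF assms]]]
  by (rule integral_unique)

lemma int_theta: "integral {0..pi/2} (Hf a d b e n) = Tn a d b e n"
proof -
  have "integral {0..pi/2} (Hf a d b e n) = (\<Sum>j\<le>n. integral {0..pi/2} (\<lambda>\<theta>. (of_nat (n choose j) / fact n) * of_real (Tf j (n-j) \<theta>) * Kc a d j * Kc b e (n-j)))"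
    unfolding Hf_def by (rule integral_sum) (auto intro!: integrable_continuous_interval continuous_intros)
  also have "\<dots> = Tn a d b e n"
    unfolding Tn_def by (simp only: Henstock_Kurzweil_Integration.integral_mult_right Henstock_Kurzweil_Integration.integral_mult_left integral_of_real_cont[OF cont_Tf])
  finally show ?thesis .
qed

lemma norm_Xf: "norm (Xf a d t) \<le> norm a + norm d"
  unfolding Xf_def by (rule order_trans[OF norm_triangle_ineq]) (simp add: norm_mult)

lemma norm_Wf: "norm (Wf \<theta>) \<le> 1"
proof -
  have "\<bar>sin \<theta> * cos \<theta>\<bar> \<le> 1"
    using abs_sin_le_one[of \<theta>] abs_cos_le_one[of \<theta>] by (simp add: abs_mult mult_le_one)
  moreover have "1 \<le> pi^2" using pi_gt3 by (intro one_le_power) simp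
  then have "1 \<le> 2 * pi^2" by simp
  ultimately have "\<bar>sin \<theta> * cos \<theta>\<bar> / (2*pi^2) \<le> 1" by (simp add: divide_le_eq_1)
  then show ?thesis unfolding Wf_def norm_of_real by (simp add: abs_divide)
qed

lemma norm_Ff: "norm (Ff a d b e n \<theta> \<alpha> \<gamma>) \<le> (norm a + norm d + norm b + norm e)^n / fact n"
proof -
  have "norm (of_real (cos \<theta>) * Xf a d \<alpha>) = \<bar>cos \<theta>\<bar> * norm (Xf a d \<alpha>)" by (simp add: norm_mult)
  also have "\<dots> \<le> 1 * (norm a + norm d)"
    by (rule mult_mono) (auto simp: abs_cos_le_one norm_Xf)
  finally have 1: "norm (of_real (cos \<theta>) * Xf a d \<alpha>) \<le> norm a + norm d" by simp
  have "norm (of_real (sin \<theta>) * Xf b e \<gamma>) = \<bar>sin \<theta>\<bar> * norm (Xf b e \<gamma>)" by (simp add: norm_mult)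
  also have "\<dots> \<le> 1 * (norm b + norm e)"
    by (rule mult_mono) (auto simp: abs_sin_le_one norm_Xf)
  finally have 2: "norm (of_real (sin \<theta>) * Xf b e \<gamma>) \<le> norm b + norm e" by simp
  from 1 2 have "norm (of_real (cos \<theta>) * Xf a d \<alpha> + of_real (sin \<theta>) * Xf b e \<gamma>) \<le> norm a + norm d + norm b + norm e"
    by (smt (verit) norm_triangle_ineq)
  then have "norm (of_real (cos \<theta>) * Xf a d \<alpha> + of_real (sin \<theta>) * Xf b e \<gamma>) ^ n \<le> (norm a + norm d + norm b + norm e)^n"
    by (rule power_mono) simp
  then have "norm ((of_real (cos \<theta>) * Xf a d \<alpha> + of_real (sin \<theta>) * Xf b e \<gamma>)^n / fact n) \<le> (norm a + norm d + norm b + norm e)^n / fact n"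
    by (simp add: norm_divide norm_power divide_right_mono)
  moreover have "norm (Wf \<theta>) \<le> 1" by (rule norm_Wf)
  ultimately have "norm ((of_real (cos \<theta>) * Xf a d \<alpha> + of_real (sin \<theta>) * Xf b e \<gamma>)^n / fact n) * norm (Wf \<theta>) \<le> (norm a + norm d + norm b + norm e)^n / fact n * 1"
    by (rule mult_mono) auto
  then show ?thesis unfolding Ff_def norm_mult by simp
qed

definition Ig where
  "Ig a d b e \<theta> \<alpha> = integral {0..2*pi} (\<lambda>\<gamma>. exp (of_real (cos \<theta>) * Xf a d \<alpha> + of_real (sin \<theta>) * Xf b e \<gamma>) * Wf \<theta>)"

lemma cont_Ff: "continuous_on S (Ff a d b e n \<theta> \<alpha>)"
  unfolding Ff_def by (intro continuous_intros) auto

lemma cont_Gf: "continuous_on S (Gf a d b e n \<theta>)"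
  unfolding Gf_def by (intro continuous_intros)

lemma cont_Hf: "continuous_on S (Hf a d b e n)"
  unfolding Hf_def by (intro continuous_intros)

lemma L_gamma: "(\<lambda>n. Gf a d b e n \<theta> \<alpha>) sums Ig a d b e \<theta> \<alpha>"
proof -
  have S: "(\<lambda>n. integral {0..2*pi} (Ff a d b e n \<theta> \<alpha>)) sums integral {0..2*pi} (\<lambda>\<gamma>. \<Sum>n. Ff a d b e n \<theta> \<alpha> \<gamma>)"
    by (rule termwise_integral[OF _ cont_Ff norm_Ff exp_bound_summable]) simp
  have "(\<lambda>\<gamma>. \<Sum>n. Ff a d b e n \<theta> \<alpha> \<gamma>) = (\<lambda>\<gamma>. exp (of_real (cos \<theta>) * Xf a d \<alpha> + of_real (sin \<theta>) * Xf b e \<gamma>) * Wf \<theta>)"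
    unfolding Ff_def by (rule ext) (rule sums_unique[symmetric], rule sums_mult2, rule exp_sums_div)
  then show ?thesis using S unfolding int_gamma Ig_def by simp
qed

lemma norm_Gf: "norm (Gf a d b e n \<theta> \<alpha>) \<le> (norm a + norm d + norm b + norm e)^n / fact n * (2*pi - 0)"
  unfolding int_gamma[symmetric] by (rule integral_bound[OF _ cont_Ff norm_Ff]) simp

lemma L_alpha: "(\<lambda>n. Hf a d b e n \<theta>) sums integral {0..2*pi} (Ig a d b e \<theta>)"
proof -
  have S: "(\<lambda>n. integral {0..2*pi} (Gf a d b e n \<theta>)) sums integral {0..2*pi} (\<lambda>\<alpha>. \<Sum>n. Gf a d b e n \<theta> \<alpha>)"
    by (rule termwise_integral[OF _ cont_Gf norm_Gf summable_mult2[OF exp_bound_summable]]) simp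
  have "(\<lambda>\<alpha>. \<Sum>n. Gf a d b e n \<theta> \<alpha>) = Ig a d b e \<theta>"
    by (rule ext) (rule sums_unique[symmetric], rule L_gamma)
  then show ?thesis using S unfolding int_alpha by simp
qed

lemma norm_Hf: "norm (Hf a d b e n \<theta>) \<le> (norm a + norm d + norm b + norm e)^n / fact n * (2*pi - 0) * (2*pi - 0)"
  unfolding int_alpha[symmetric] by (rule integral_bound[OF _ cont_Gf norm_Gf]) simp

lemma L_theta: "(\<lambda>n. Tn a d b e n) sums integral {0..pi/2} (\<lambda>\<theta>. integral {0..2*pi} (Ig a d b e \<theta>))"
proof -
  have S: "(\<lambda>n. integral {0..pi/2} (Hf a d b e n)) sums integral {0..pi/2} (\<lambda>\<theta>. \<Sum>n. Hf a d b e n \<theta>)"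
    by (rule termwise_integral[OF _ cont_Hf norm_Hf summable_mult2[OF summable_mult2[OF exp_bound_summable]]]) simp
  have "(\<lambda>\<theta>. \<Sum>n. Hf a d b e n \<theta>) = (\<lambda>\<theta>. integral {0..2*pi} (Ig a d b e \<theta>))"
    by (rule ext) (rule sums_unique[symmetric], rule L_alpha)
  then show ?thesis using S unfolding int_theta by simp
qed

lemma Tn_odd: "odd n \<Longrightarrow> Tn a d b e n = 0"
  unfolding Tn_def by (rule sum.neutral) (auto simp: Kc_def)

lemma sum_even_reindex: "(\<Sum>j::nat\<le>2*(k::nat). if even j then g (j div 2) else 0) = (\<Sum>p\<le>k. (g p :: 'a::comm_monoid_add))"
proof (induction k)
  case 0 then show ?case by simp
next
  case (Suc k)
  have "2 * Suc k = Suc (Suc (2*k))" by simp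
  then show ?case using Suc by (simp add: sum.atMost_Suc)
qed

lemma IT_even: "integral {0..pi/2} (Tf (2*p) (2*q)) = fact p * fact q / (2 * fact (p+q+1)) / (2*pi^2)"
proof -
  have "Tf (2*p) (2*q) = (\<lambda>\<theta>. cos \<theta>^(2*p+1) * sin \<theta>^(2*q+1) / (2*pi^2))"
    unfolding Tf_def by (rule ext) (simp add: field_simps)
  then show ?thesis using Jr_formula[of p q] unfolding Jr_def by simp
qed

lemma g_value:
  assumes "p + q = k"
  shows "(of_nat ((2*k) choose (2*p)) / fact (2*k)) * of_real (integral {0..pi/2} (Tf (2*p) (2*q))) * Kc a d (2*p) * Kc b e (2*q)
     = of_nat (k choose p) * (a*d)^p * (b*e)^q / (fact k * fact (k+1))"
proof -
  have e: "2*k - 2*p = 2*q" using assms by simp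
  have "(of_nat ((2*k) choose (2*p)) :: complex) = fact (2*k) / (fact (2*p) * fact (2*k - 2*p))"
    by (rule binomial_fact) (use assms in simp)
  then have c1: "(of_nat ((2*k) choose (2*p)) :: complex) = fact (2*k) / (fact (2*p) * fact (2*q))"
    unfolding e .
  have c2: "(of_nat ((2*p) choose p) :: complex) = fact (2*p) / (fact p * fact p)"
    using binomial_fact[of p "2*p"] by (simp add: mult_2)
  have c3: "(of_nat ((2*q) choose q) :: complex) = fact (2*q) / (fact q * fact q)"
    using binomial_fact[of q "2*q"] by (simp add: mult_2)
  have e2: "k - p = q" using assms by simp
  have "(of_nat (k choose p) :: complex) = fact k / (fact p * fact (k - p))"
    by (rule binomial_fact) (use assms in simp)
  then have c4: "(of_nat (k choose p) :: complex) = fact k / (fact p * fact q)"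
    unfolding e2 .
  have k1: "fact (k+1) = (of_nat (k+1) :: complex) * fact k" by simp
  have pi: "(of_real pi :: complex) \<noteq> 0" by simp
  have K1: "Kc a d (2*p) = of_real (2*pi) * (fact (2*p) / (fact p * fact p)) * (a*d)^p"
    unfolding Kc_def c2[symmetric] by simp
  have K2: "Kc b e (2*q) = of_real (2*pi) * (fact (2*q) / (fact q * fact q)) * (b*e)^q"
    unfolding Kc_def c3[symmetric] by simp
  have kk: "fact k = fact (p+q) * (1::complex)" using assms by simp
  show ?thesis
    unfolding IT_even K1 K2 c1 c4 using assms pi
    by (simp add: field_simps power2_eq_square del: fact_Suc)
qed

lemma Tn_even: "Tn a d b e (2*k) = (a*d + b*e)^k / (fact k * fact (k+1))"
proof -
  define g where "g p = (of_nat ((2*k) choose (2*p)) / fact (2*k)) * of_real (integral {0..pi/2} (Tf (2*p) (2*(k-p)))) * Kc a d (2*p) * Kc b e (2*(k-p))" for p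
  have "Tn a d b e (2*k) = (\<Sum>j\<le>2*k. if even j then g (j div 2) else 0)"
    unfolding Tn_def
  proof (rule sum.cong)
    fix j assume j: "j \<in> {..2*k}"
    show "of_nat (2 * k choose j) / fact (2 * k) * of_real (integral {0..pi / 2} (Tf j (2 * k - j))) * Kc a d j * Kc b e (2 * k - j) =
         (if even j then g (j div 2) else 0)"
    proof (cases "even j")
      case True
      then obtain p where p: "j = 2*p" by blast
      have "2*k - j = 2*(k-p)" using p by simp
      then show ?thesis using True p by (simp add: g_def)
    qed (simp add: Kc_def)
  qed simp
  also have "\<dots> = (\<Sum>p\<le>k. g p)" by (rule sum_even_reindex)
  also have "\<dots> = (\<Sum>p\<le>k. of_nat (k choose p) * (a*d)^p * (b*e)^(k-p) / (fact k * fact (k+1)))"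
    by (rule sum.cong[OF refl]) (unfold g_def, rule g_value, simp)
  also have "\<dots> = (a*d + b*e)^k / (fact k * fact (k+1))"
    by (simp add: binomial_ring sum_divide_distrib)
  finally show ?thesis .
qed

lemma su2_sums: "(\<lambda>k. (a*d+b*e)^k / (fact k * fact (k+1))) sums integral {0..pi/2} (\<lambda>\<theta>. integral {0..2*pi} (Ig a d b e \<theta>))"
proof -
  have "(\<lambda>k. Tn a d b e (2*k)) sums integral {0..pi/2} (\<lambda>\<theta>. integral {0..2*pi} (Ig a d b e \<theta>))"
    using L_theta even_reindex_sums[of "Tn a d b e"] Tn_odd by blast
  then show ?thesis unfolding Tn_even .
qed

lemma gSU2_cnj:
  "cnj (gSU2 \<theta> \<alpha> \<gamma> 1 1) = of_real (cos \<theta>) * cis (-\<alpha>)"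
  "cnj (gSU2 \<theta> \<alpha> \<gamma> 1 2) = of_real (sin \<theta>) * cis (-\<gamma>)"
  "cnj (gSU2 \<theta> \<alpha> \<gamma> 2 1) = - of_real (sin \<theta>) * cis \<gamma>"
  "cnj (gSU2 \<theta> \<alpha> \<gamma> 2 2) = of_real (cos \<theta>) * cis \<alpha>"
  by (simp_all add: gSU2_def cis_cnj)

lemma part3:
  assumes h: "h > 0"
  shows "Q8 h z w =
              integral {0..pi/2} (\<lambda>\<theta>. integral {0..2*pi} (\<lambda>\<alpha>. integral {0..2*pi} (\<lambda>\<gamma>.
                 exp (cdot 8 z (mat_vec 8 (T8 (gSU2 \<theta> \<alpha> \<gamma>)) w) / of_real h)
                 * of_real (sin \<theta> * cos \<theta> / (2 * pi\<^sup>2)))))"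
proof -
  define a where "a = M11 z w / of_real h"
  define d where "d = M22 z w / of_real h"
  define b where "b = M12 z w / of_real h"
  define e where "e = - M21 z w / of_real h"
  have hz: "(of_real h :: complex) \<noteq> 0" using h by simp
  have pt: "exp (cdot 8 z (mat_vec 8 (T8 (gSU2 \<theta> \<alpha> \<gamma>)) w) / of_real h) * of_real (sin \<theta> * cos \<theta> / (2 * pi\<^sup>2))
     = exp (of_real (cos \<theta>) * Xf a d \<alpha> + of_real (sin \<theta>) * Xf b e \<gamma>) * Wf \<theta>" for \<theta> \<alpha> \<gamma>
  proof -
    have "cdot 8 z (mat_vec 8 (T8 (gSU2 \<theta> \<alpha> \<gamma>)) w) / of_real h = of_real (cos \<theta>) * Xf a d \<alpha> + of_real (sin \<theta>) * Xf b e \<gamma>"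
      unfolding cdot8T gSU2_cnj a_def b_def d_def e_def Xf_def using hz by (simp add: field_simps)
    then show ?thesis unfolding Wf_def by simp
  qed
  have I: "integral {0..pi/2} (\<lambda>\<theta>. integral {0..2*pi} (\<lambda>\<alpha>. integral {0..2*pi} (\<lambda>\<gamma>.
                 exp (cdot 8 z (mat_vec 8 (T8 (gSU2 \<theta> \<alpha> \<gamma>)) w) / of_real h)
                 * of_real (sin \<theta> * cos \<theta> / (2 * pi\<^sup>2)))))
        = integral {0..pi/2} (\<lambda>\<theta>. integral {0..2*pi} (Ig a d b e \<theta>))"
    unfolding pt Ig_def ..
  have T: "(\<lambda>k. (a*d+b*e)^k / (fact k * fact (k+1))) = (\<lambda>k. rho z w ^ k / (of_nat (fact k * fact (k+1)) * of_real h ^ (2*k)))"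
  proof (rule ext)
    fix k
    have "a*d+b*e = rho z w / of_real h ^ 2"
      unfolding rho_eq a_def b_def d_def e_def using hz by (simp add: field_simps power2_eq_square)
    moreover have e1: "(of_nat (fact k * fact (k+1)) :: complex) = fact k * fact (k+1)" by (simp only: of_nat_mult of_nat_fact)
    moreover have e2: "(of_real h :: complex) ^ (2*k) = (of_real h ^ 2)^k" by (simp only: power_mult)
    ultimately show "(a*d+b*e)^k / (fact k * fact (k+1)) = rho z w ^ k / (of_nat (fact k * fact (k+1)) * of_real h ^ (2*k))"
      by (simp only: power_divide divide_divide_eq_left mult.commute)
  qed
  show ?thesis unfolding I Q8_def using su2_sums[of a d b e] unfolding T by (simp add: sums_iff)
qed

theorem proposition2p3:
  fixes h :: real
  assumes "h > 0"
  shows "(\<forall>z w. nonzero_vec 2 z \<and> nonzero_vec 2 w \<longrightarrow>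
            Q2 h z w = (exp (cdot 2 z w / of_real h) + exp (- cdot 2 z w / of_real h)) / 2)
       \<and> (\<forall>z w. nonzero_vec 4 z \<and> nonzero_vec 4 w \<longrightarrow>
            Q4 h z w = of_real (1 / (2 * pi)) *
              integral {0..2*pi} (\<lambda>\<psi>. exp (cdot 4 z (mat_vec 4 (T4 (cis \<psi>)) w) / of_real h)))
       \<and> (\<forall>z w. nonzero_vec 8 z \<and> nonzero_vec 8 w \<longrightarrow>
            Q8 h z w =
              integral {0..pi/2} (\<lambda>\<theta>. integral {0..2*pi} (\<lambda>\<alpha>. integral {0..2*pi} (\<lambda>\<gamma>.
                 exp (cdot 8 z (mat_vec 8 (T8 (gSU2 \<theta> \<alpha> \<gamma>)) w) / of_real h)
                 * of_real (sin \<theta> * cos \<theta> / (2 * pi\<^sup>2))))))"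
  using part1 part2 part3[OF assms] by blast

end
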